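(* Let $\Psi\subset\mathrm{Cl}^+(3)$ be the following set of 20 spinors (forming an $A_4$ root system inside the $H_4$ root system $2I$), writing $e_{ij}=e_ie_j$ and $\sigma=\frac{1-\sqrt5}{2}$: $\pm1$; $\pm\tfrac12(\tau e_{12}+\sigma e_{13}+e_{23})$; $\pm\tfrac12(e_{12}-\tau e_{13}+\sigma e_{23})$; $\pm\tfrac12(\sigma e_{12}-e_{13}-\tau e_{23})$; and $\tfrac12(\epsilon_1+\epsilon_2B)$ for all signs $\epsilon_1,\epsilon_2\in\{\pm1\}$ and $B\in\{\tau e_{12}+\sigma e_{23},\ \sigma e_{13}+\tau e_{23},\ \sigma e_{12}-\tau e_{13}\}$. Let $C=2I\setminus\Psi$ (100 elements). Then both $\Psi$ and $C$ are invariant under the reflection group $A_4$ generated by the reflections $s_R(X)=-R\tilde XR$, $R\in\Psi$.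
   Context: $\mathrm{Cl}(3)$ is the real Clifford algebra of Euclidean $\mathbb{R}^3$ with orthonormal basis $e_1,e_2,e_3$ ($e_i^2=1$, $e_ie_j=-e_je_i$ for $i\neq j$). The even subalgebra $\mathrm{Cl}^+(3)$ is spanned by $1,e_2e_3,e_3e_1,e_1e_2$ (spinors). Reversal $\tilde{\ }$ reverses the order of vector factors. The spinor inner product $(R_1,R_2)=\tfrac12(R_1\tilde R_2+R_2\tilde R_1)$ makes $\mathrm{Cl}^+(3)$ a 4D Euclidean space with orthonormal basis $1,e_2e_3,e_3e_1,e_1e_2$; for a unit spinor $R$, $s_R(X)=-R\tilde XR$ is the reflection in the hyperplane orthogonal to $R$. Let $\tau=\frac{1+\sqrt5}{2}$. The $H_3$ simple roots are $a_1=e_2$, $a_2=\tfrac12(-\tau e_1-e_2-(\tau-1)e_3)$, $a_3=e_1$. The binary icosahedral group $2I$ is the set of all products of an even number of factors from $\{a_1,a_2,a_3\}$ (order 120); viewed as 120 vectors in the 4D spinor space it is the $H_4$ root system (600-cell). *)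

theory Defs
  imports Complex_Main
begin

type_synonym vec3 = "real \<times> real \<times> real"

text \<open>Spinors (elements of Cl+(3)) as coordinates w.r.t. the basis 1, e2e3, e3e1, e1e2.\<close>
datatype spinor = Sp (sc: real) (c23: real) (c31: real) (c12: real)

text \<open>Geometric product of two vectors (an even element): ab = a.b + a^b.\<close>
fun vmul :: "vec3 \<Rightarrow> vec3 \<Rightarrow> spinor" where
  "vmul (x1,x2,x3) (y1,y2,y3) =
     Sp (x1*y1 + x2*y2 + x3*y3) (x2*y3 - x3*y2) (x3*y1 - x1*y3) (x1*y2 - x2*y1)"

text \<open>Geometric product in Cl+(3), from e_i^2 = 1, e_i e_j = - e_j e_i.\<close>
fun smul :: "spinor \<Rightarrow> spinor \<Rightarrow> spinor" where
  "smul (Sp a v1 v2 v3) (Sp b w1 w2 w3) =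
     Sp (a*b - (v1*w1 + v2*w2 + v3*w3))
        (a*w1 + b*v1 - (v2*w3 - v3*w2))
        (a*w2 + b*v2 - (v3*w1 - v1*w3))
        (a*w3 + b*v3 - (v1*w2 - v2*w1))"

fun sadd :: "spinor \<Rightarrow> spinor \<Rightarrow> spinor" where
  "sadd (Sp a b c d) (Sp a' b' c' d') = Sp (a+a') (b+b') (c+c') (d+d')"

fun sscale :: "real \<Rightarrow> spinor \<Rightarrow> spinor" where
  "sscale r (Sp a b c d) = Sp (r*a) (r*b) (r*c) (r*d)"

text \<open>Reversal: reverses vector factors, so bivectors change sign.\<close>
fun srev :: "spinor \<Rightarrow> spinor" where
  "srev (Sp a b c d) = Sp a (-b) (-c) (-d)"

definition sone :: spinor where "sone = Sp 1 0 0 0"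

definition e1 :: vec3 where "e1 = (1,0,0)"
definition e2 :: vec3 where "e2 = (0,1,0)"
definition e3 :: vec3 where "e3 = (0,0,1)"

definition e12 :: spinor where "e12 = vmul e1 e2"
definition e13 :: spinor where "e13 = vmul e1 e3"
definition e23 :: spinor where "e23 = vmul e2 e3"

definition tau :: real where "tau = (1 + sqrt 5) / 2"
definition sigma :: real where "sigma = (1 - sqrt 5) / 2"

definition a1 :: vec3 where "a1 = e2"
definition a2 :: vec3 where "a2 = (- tau / 2, - 1 / 2, - (tau - 1) / 2)"
definition a3 :: vec3 where "a3 = e1"

text \<open>Binary icosahedral group 2I: all products of an even number (including zero)
  of factors from {a1,a2,a3}.\<close>
inductive_set twoI :: "spinor set" where
  one: "sone \<in> twoI"
| step: "\<lbrakk>x \<in> twoI; a \<in> {a1,a2,a3}; b \<in> {a1,a2,a3}\<rbrakk> \<Longrightarrow> smul x (vmul a b) \<in> twoI"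

definition sref :: "spinor \<Rightarrow> spinor \<Rightarrow> spinor" where
  "sref R X = sscale (-1) (smul (smul R (srev X)) R)"

definition Psi :: "spinor set" where
  "Psi =
     {sscale e sone | e. e \<in> {1, -1}}
   \<union> {sscale (e/2) (sadd (sadd (sscale tau e12) (sscale sigma e13)) e23) | e. e \<in> {1, -1}}
   \<union> {sscale (e/2) (sadd (sadd e12 (sscale (-tau) e13)) (sscale sigma e23)) | e. e \<in> {1, -1}}
   \<union> {sscale (e/2) (sadd (sadd (sscale sigma e12) (sscale (-1) e13)) (sscale (-tau) e23)) | e. e \<in> {1, -1}}
   \<union> {sscale (1/2) (sadd (sscale e1' sone) (sscale e2' B)) | e1' e2' B.
        e1' \<in> {1, -1} \<and> e2' \<in> {1, -1} \<and>
        B \<in> {sadd (sscale tau e12) (sscale sigma e23),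
              sadd (sscale sigma e13) (sscale tau e23),
              sadd (sscale sigma e12) (sscale (-tau) e13)}}"

definition Cset :: "spinor set" where "Cset = twoI - Psi"

text \<open>The reflection group generated by s_R, R in Psi (as the set of all finite
  compositions of generators; since each s_R is an involution this is the generated group).\<close>
inductive_set A4grp :: "(spinor \<Rightarrow> spinor) set" where
  idI: "id \<in> A4grp"
| compI: "\<lbrakk>g \<in> A4grp; R \<in> Psi\<rbrakk> \<Longrightarrow> sref R \<circ> g \<in> A4grp"

end

theory Submission
  imports Defs
begin

section \<open>Integers of Z[sqrt 5]\<close>

type_synonym zn = "int * int"

fun embz :: "zn \<Rightarrow> real" where "embz (a,b) = of_int a + of_int b * sqrt 5"
fun zadd :: "zn \<Rightarrow> zn \<Rightarrow> zn" where "zadd (a,b) (c,d) = (a+c, b+d)"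
fun zsub :: "zn \<Rightarrow> zn \<Rightarrow> zn" where "zsub (a,b) (c,d) = (a-c, b-d)"
fun zmul :: "zn \<Rightarrow> zn \<Rightarrow> zn" where "zmul (a,b) (c,d) = (a*c + 5*b*d, a*d+b*c)"
fun zneg :: "zn \<Rightarrow> zn" where "zneg (a,b) = (-a,-b)"
fun zsc :: "int \<Rightarrow> zn \<Rightarrow> zn" where "zsc k (a,b) = (k*a,k*b)"

lemma embz_add[simp]: "embz (zadd x y) = embz x + embz y"
  by (cases x; cases y) (simp add: algebra_simps)
lemma embz_sub[simp]: "embz (zsub x y) = embz x - embz y"
  by (cases x; cases y) (simp add: algebra_simps)
lemma embz_neg[simp]: "embz (zneg x) = - embz x"
  by (cases x) (simp add: algebra_simps)
lemma embz_sc[simp]: "embz (zsc k x) = of_int k * embz x"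
  by (cases x) (simp add: algebra_simps)

lemma aux5: "s * s = (5::real) \<Longrightarrow> x*z + 5*y*w + (x*w+y*z)*s = (x + y*s)*(z+w*s)"
proof -
  assume h: "s * s = 5"
  have "(x + y*s)*(z+w*s) = x*z + y*w*(s*s) + (x*w+y*z)*s" by (simp add: algebra_simps)
  then show ?thesis using h by simp
qed

lemma embz_mul[simp]: "embz (zmul x y) = embz x * embz y"
proof (cases x; cases y)
  fix a b c d assume xy: "x = (a,b)" "y = (c,d)"
  have s: "sqrt 5 * sqrt 5 = (5::real)" by simp
  show ?thesis using xy aux5[OF s, where x="of_int a" and y="of_int b" and z="of_int c" and w="of_int d"]
    by (simp add: mult.assoc)
qed

section \<open>Integer spinors\<close>

datatype isp = ISp zn zn zn zn

fun Ei :: "isp \<Rightarrow> spinor" where "Ei (ISp a b c d) = Sp (embz a) (embz b) (embz c) (embz d)"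

fun ismul :: "isp \<Rightarrow> isp \<Rightarrow> isp" where
  "ismul (ISp a v1 v2 v3) (ISp b w1 w2 w3) =
     ISp (zsub (zmul a b) (zadd (zadd (zmul v1 w1) (zmul v2 w2)) (zmul v3 w3)))
        (zsub (zadd (zmul a w1) (zmul b v1)) (zsub (zmul v2 w3) (zmul v3 w2)))
        (zsub (zadd (zmul a w2) (zmul b v2)) (zsub (zmul v3 w1) (zmul v1 w3)))
        (zsub (zadd (zmul a w3) (zmul b v3)) (zsub (zmul v1 w2) (zmul v2 w1)))"
fun isrev :: "isp \<Rightarrow> isp" where "isrev (ISp a b c d) = ISp a (zneg b) (zneg c) (zneg d)"
fun isc :: "int \<Rightarrow> isp \<Rightarrow> isp" where
  "isc k (ISp a b c d) = ISp (zsc k a) (zsc k b) (zsc k c) (zsc k d)"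

lemma Ei_smul[simp]: "Ei (ismul x y) = smul (Ei x) (Ei y)"
  by (cases x; cases y) simp
lemma Ei_srev[simp]: "Ei (isrev x) = srev (Ei x)"
  by (cases x) simp
lemma Ei_isc[simp]: "Ei (isc k x) = sscale (of_int k) (Ei x)"
  by (cases x) simp

type_synonym iv = "zn * zn * zn"
fun Eiv :: "iv \<Rightarrow> vec3" where "Eiv (a,b,c) = (embz a, embz b, embz c)"
fun ivmul :: "iv \<Rightarrow> iv \<Rightarrow> isp" where
  "ivmul (x1,x2,x3) (y1,y2,y3) =
     ISp (zadd (zadd (zmul x1 y1) (zmul x2 y2)) (zmul x3 y3)) (zsub (zmul x2 y3) (zmul x3 y2))
         (zsub (zmul x3 y1) (zmul x1 y3)) (zsub (zmul x1 y2) (zmul x2 y1))"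
lemma Ei_vmul[simp]: "Ei (ivmul x y) = vmul (Eiv x) (Eiv y)"
  by (cases x rule: prod_cases3; cases y rule: prod_cases3) simp

lemma smul_assoc: "smul (smul x y) z = smul x (smul y z)"
  by (cases x; cases y; cases z) (simp add: algebra_simps)
lemma srev_smul: "srev (smul x y) = smul (srev y) (srev x)"
  by (cases x; cases y) (simp add: algebra_simps)
lemma srev_srev[simp]: "srev (srev x) = x"
  by (cases x) simp
lemma srev_sscale: "srev (sscale a x) = sscale a (srev x)"
  by (cases x) simp
lemma smul_sscale_l: "smul (sscale a x) y = sscale a (smul x y)"
  by (cases x; cases y) (simp add: algebra_simps)
lemma smul_sscale_r: "smul x (sscale a y) = sscale a (smul x y)"
  by (cases x; cases y) (simp add: algebra_simps)
lemma sscale_sscale: "sscale a (sscale b x) = sscale (a*b) x"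
  by (cases x) simp
lemma sscale_1[simp]: "sscale 1 x = x"
  by (cases x) simp
lemma smul_one_r[simp]: "smul x sone = x"
  by (cases x) (simp add: sone_def)
lemma smul_one_l[simp]: "smul sone x = x"
  by (cases x) (simp add: sone_def)
lemma vmul_sscale: "vmul (a*x1, a*x2, a*x3) (a*y1, a*y2, a*y3) = sscale (a*a) (vmul (x1,x2,x3) (y1,y2,y3))"
  by (simp add: algebra_simps)

lemma sref_invol:
  assumes r1: "smul R (srev R) = sone" and r2: "smul (srev R) R = sone"
  shows "sref R (sref R X) = X"
proof -
  have c1: "smul R (smul (srev R) Y) = Y" for Y
    by (metis r1 smul_assoc smul_one_l)
  have "sref R (sref R X) = smul R (smul (smul (srev R) (smul X (srev R))) R)"
    by (simp add: sref_def srev_sscale srev_smul smul_sscale_l smul_sscale_r sscale_sscale smul_assoc)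
  also have "\<dots> = smul R (smul (srev R) (smul X (smul (srev R) R)))"
    by (simp add: smul_assoc)
  also have "\<dots> = X" using c1 r2 by simp
  finally show ?thesis .
qed

section \<open>The group 2I\<close>

lemma twoI_mul: "y \<in> twoI \<Longrightarrow> x \<in> twoI \<Longrightarrow> smul x y \<in> twoI"
proof (induction y rule: twoI.induct)
  case one then show ?case by simp
next
  case (step y a b)
  then show ?case by (simp add: smul_assoc[symmetric] twoI.step)
qed

lemma srev_vmul: "srev (vmul a b) = vmul b a"
  by (cases a rule: prod_cases3; cases b rule: prod_cases3) (simp add: algebra_simps)

lemma vmul_in: "a \<in> {a1,a2,a3} \<Longrightarrow> b \<in> {a1,a2,a3} \<Longrightarrow> vmul a b \<in> twoI"
proof -
  assume "a \<in> {a1,a2,a3}" "b \<in> {a1,a2,a3}"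
  then have "smul sone (vmul a b) \<in> twoI" by (rule twoI.step[OF twoI.one])
  then show ?thesis by simp
qed

lemma twoI_rev: "x \<in> twoI \<Longrightarrow> srev x \<in> twoI"
proof (induction x rule: twoI.induct)
  case one then show ?case by (simp add: sone_def twoI.one[unfolded sone_def])
next
  case (step x a b)
  then show ?case by (simp add: srev_smul srev_vmul twoI_mul vmul_in)
qed

lemma m1_in: "sscale (-1) sone \<in> twoI"
proof -
  have "smul (smul sone (vmul a1 a3)) (vmul a1 a3) \<in> twoI"
    by (rule twoI.step[OF twoI.step[OF twoI.one]]) simp_all
  moreover have "smul (smul sone (vmul a1 a3)) (vmul a1 a3) = sscale (-1) sone"
    by (simp add: a1_def a3_def e1_def e2_def sone_def)
  ultimately show ?thesis by simp
qed

lemma sref_twoI: "R \<in> twoI \<Longrightarrow> X \<in> twoI \<Longrightarrow> sref R X \<in> twoI"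
proof -
  assume R: "R \<in> twoI" and X: "X \<in> twoI"
  have "sref R X = smul (sscale (-1) sone) (smul (smul R (srev X)) R)"
    by (simp add: sref_def smul_sscale_l)
  then show ?thesis using R X m1_in by (simp add: twoI_mul twoI_rev)
qed

definition gv :: "nat \<Rightarrow> vec3" where "gv i = (if i = 0 then a1 else if i = 1 then a2 else a3)"
definition igv :: "nat \<Rightarrow> iv" where
  "igv i = (if i = 0 then ((0,0),(4,0),(0,0)) else if i = 1 then ((-1,-1),(-2,0),(1,-1))
   else ((4,0),(0,0),(0,0)))"

lemma Eiv_igv: "Eiv (igv i) = (case gv i of (x,y,z) \<Rightarrow> (4*x, 4*y, 4*z))"
  by (simp add: gv_def igv_def a1_def e2_def a3_def e1_def a2_def tau_def field_simps)

lemma Ei_igv: "Ei (ivmul (igv i) (igv j)) = sscale 16 (vmul (gv i) (gv j))"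
proof -
  obtain x y z where g1: "gv i = (x,y,z)" by (metis prod_cases3)
  obtain x' y' z' where g2: "gv j = (x',y',z')" by (metis prod_cases3)
  show ?thesis using vmul_sscale[of 4] by (simp add: Eiv_igv g1 g2)
qed

fun wprod :: "spinor \<Rightarrow> (nat*nat) list \<Rightarrow> spinor" where
  "wprod acc [] = acc"
| "wprod acc ((i,j)#w) = wprod (smul acc (vmul (gv i) (gv j))) w"
fun iwprod :: "isp \<Rightarrow> (nat*nat) list \<Rightarrow> isp" where
  "iwprod acc [] = acc"
| "iwprod acc ((i,j)#w) = iwprod (ismul acc (ivmul (igv i) (igv j))) w"

lemma wprod_sscale: "wprod (sscale c acc) w = sscale c (wprod acc w)"
  by (induction acc w arbitrary: c rule: wprod.induct) (simp_all add: smul_sscale_l)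

lemma Ei_iwprod: "Ei (iwprod acc w) = sscale (16 ^ length w) (wprod (Ei acc) w)"
  by (induction acc w rule: iwprod.induct)
     (simp_all add: Ei_igv smul_sscale_r wprod_sscale sscale_sscale mult.commute del: Ei_vmul)

lemma gv_in: "gv i \<in> {a1,a2,a3}"
  by (simp add: gv_def)

lemma wprod_in: "acc \<in> twoI \<Longrightarrow> wprod acc w \<in> twoI"
  by (induction acc w rule: wprod.induct) (auto intro!: twoI.step gv_in)

section \<open>Psi in coordinates\<close>

definition P :: "isp \<Rightarrow> spinor" where "P x = sscale (1/4) (Ei x)"

definition ipsis :: "isp list" where "ipsis = [ISp (4,0) (0,0) (0,0) (0,0),
  ISp (-4,0) (0,0) (0,0) (0,0),
  ISp (0,0) (2,0) (-1,1) (1,1),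
  ISp (0,0) (-2,0) (1,-1) (-1,-1),
  ISp (0,0) (1,-1) (1,1) (2,0),
  ISp (0,0) (-1,1) (-1,-1) (-2,0),
  ISp (0,0) (-1,-1) (2,0) (1,-1),
  ISp (0,0) (1,1) (-2,0) (-1,1),
  ISp (2,0) (1,-1) (0,0) (1,1),
  ISp (2,0) (-1,1) (0,0) (-1,-1),
  ISp (-2,0) (1,-1) (0,0) (1,1),
  ISp (-2,0) (-1,1) (0,0) (-1,-1),
  ISp (2,0) (1,1) (-1,1) (0,0),
  ISp (2,0) (-1,-1) (1,-1) (0,0),
  ISp (-2,0) (1,1) (-1,1) (0,0),
  ISp (-2,0) (-1,-1) (1,-1) (0,0),
  ISp (2,0) (0,0) (1,1) (1,-1),
  ISp (2,0) (0,0) (-1,-1) (-1,1),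
  ISp (-2,0) (0,0) (1,1) (1,-1),
  ISp (-2,0) (0,0) (-1,-1) (-1,1)]"

definition words :: "(nat*nat) list list" where "words = [[],
  [(0,2),(0,2)],
  [(0,2),(1,0),(2,1),(2,0)],
  [(0,2),(1,0),(2,1),(0,2)],
  [(0,1),(2,1),(2,0),(1,2),(1,0)],
  [(0,1),(2,1),(0,2),(1,2),(1,0)],
  [(2,1),(0,2),(1,0),(2,1),(0,2),(1,2)],
  [(2,1),(0,2),(1,0),(2,1),(2,0),(1,2)],
  [(1,2),(0,2)],
  [(2,0),(2,1)],
  [(0,1)],
  [(1,0)],
  [(0,1),(0,2),(1,0),(2,1),(2,1)],
  [(1,2),(1,0),(2,1),(0,2),(1,0)],
  [(1,2),(1,0),(2,1),(2,0),(1,0)],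
  [(0,1),(0,2),(1,2),(0,1),(2,1)],
  [(1,0),(2,1),(2,0),(1,2)],
  [(2,1),(0,2),(1,2),(0,1)],
  [(2,1),(0,2),(1,0),(2,1)],
  [(1,0),(2,1),(0,2),(1,2)]]"

definition i4 :: isp where "i4 = ISp (4,0) (0,0) (0,0) (0,0)"

lemma words_ok: "list_all2 (\<lambda>p w. iwprod i4 w = isc (16 ^ length w) p) ipsis words"
  by (simp add: ipsis_def words_def i4_def igv_def)

lemma Ei_i4: "Ei i4 = sscale 4 sone"
  by (simp add: i4_def sone_def)

lemma psis_twoI: "P ` set ipsis \<subseteq> twoI"
proof
  fix x assume "x \<in> P ` set ipsis"
  then obtain p where p: "p \<in> set ipsis" "x = P p" by auto
  from p(1) obtain k where k: "k < length ipsis" "ipsis ! k = p" by (metis in_set_conv_nth)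
  let ?w = "words ! k"
  have eq: "iwprod i4 ?w = isc (16 ^ length ?w) p" using words_ok k list_all2_nthD by fastforce
  have "sscale (16 ^ length ?w) (sscale 4 (wprod sone ?w)) = sscale (16 ^ length ?w) (Ei p)"
    using arg_cong[OF eq, of Ei] by (simp add: Ei_iwprod Ei_i4 wprod_sscale)
  then have "sscale 4 (wprod sone ?w) = Ei p"
    by (cases "wprod sone ?w"; cases "Ei p") simp
  then have "x = wprod sone ?w" using p(2) unfolding P_def
    by (metis sscale_sscale sscale_1 mult.commute divide_self_if zero_neq_numeral times_divide_eq_right mult_1)
  then show "x \<in> twoI" by (simp add: wprod_in twoI.one)
qed

definition chk :: "isp \<Rightarrow> bool" where
  "chk R = (list_all (\<lambda>X. ismul (ismul R (isrev X)) R \<in> isc (-16) ` set ipsis) ipsis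
            \<and> ismul R (isrev R) = isc 16 (ISp (1,0) (0,0) (0,0) (0,0))
            \<and> ismul (isrev R) R = isc 16 (ISp (1,0) (0,0) (0,0) (0,0)))"

lemma chk0: "chk (ISp (4,0) (0,0) (0,0) (0,0))"
  by (simp add: chk_def ipsis_def)

lemma chk1: "chk (ISp (-4,0) (0,0) (0,0) (0,0))"
  by (simp add: chk_def ipsis_def)

lemma chk2: "chk (ISp (0,0) (2,0) (-1,1) (1,1))"
  by (simp add: chk_def ipsis_def)

lemma chk3: "chk (ISp (0,0) (-2,0) (1,-1) (-1,-1))"
  by (simp add: chk_def ipsis_def)

lemma chk4: "chk (ISp (0,0) (1,-1) (1,1) (2,0))"
  by (simp add: chk_def ipsis_def)

lemma chk5: "chk (ISp (0,0) (-1,1) (-1,-1) (-2,0))"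
  by (simp add: chk_def ipsis_def)

lemma chk6: "chk (ISp (0,0) (-1,-1) (2,0) (1,-1))"
  by (simp add: chk_def ipsis_def)

lemma chk7: "chk (ISp (0,0) (1,1) (-2,0) (-1,1))"
  by (simp add: chk_def ipsis_def)

lemma chk8: "chk (ISp (2,0) (1,-1) (0,0) (1,1))"
  by (simp add: chk_def ipsis_def)

lemma chk9: "chk (ISp (2,0) (-1,1) (0,0) (-1,-1))"
  by (simp add: chk_def ipsis_def)

lemma chk10: "chk (ISp (-2,0) (1,-1) (0,0) (1,1))"
  by (simp add: chk_def ipsis_def)

lemma chk11: "chk (ISp (-2,0) (-1,1) (0,0) (-1,-1))"
  by (simp add: chk_def ipsis_def)

lemma chk12: "chk (ISp (2,0) (1,1) (-1,1) (0,0))"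
  by (simp add: chk_def ipsis_def)

lemma chk13: "chk (ISp (2,0) (-1,-1) (1,-1) (0,0))"
  by (simp add: chk_def ipsis_def)

lemma chk14: "chk (ISp (-2,0) (1,1) (-1,1) (0,0))"
  by (simp add: chk_def ipsis_def)

lemma chk15: "chk (ISp (-2,0) (-1,-1) (1,-1) (0,0))"
  by (simp add: chk_def ipsis_def)

lemma chk16: "chk (ISp (2,0) (0,0) (1,1) (1,-1))"
  by (simp add: chk_def ipsis_def)

lemma chk17: "chk (ISp (2,0) (0,0) (-1,-1) (-1,1))"
  by (simp add: chk_def ipsis_def)

lemma chk18: "chk (ISp (-2,0) (0,0) (1,1) (1,-1))"
  by (simp add: chk_def ipsis_def)

lemma chk19: "chk (ISp (-2,0) (0,0) (-1,-1) (-1,1))"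
  by (simp add: chk_def ipsis_def)

lemma chk_all: "list_all chk ipsis"
  by (simp only: ipsis_def list.pred_inject chk0 chk1 chk2 chk3 chk4 chk5 chk6 chk7 chk8 chk9 chk10 chk11 chk12 chk13 chk14 chk15 chk16 chk17 chk18 chk19 simp_thms)

lemma setL1: "{f e | e. e \<in> {a,b}} = {f a, f b}"
  by blast

lemma setL2: "{f e1 e2 B | e1 e2 B. e1 \<in> {a,b} \<and> e2 \<in> {a,b} \<and> B \<in> {x,y,z}} =
  {f a a x, f a b x, f b a x, f b b x, f a a y, f a b y, f b a y, f b b y, f a a z, f a b z, f b a z, f b b z}"
  by auto

lemma Psi_list: "Psi = set [sscale (1) sone,
  sscale (-1) sone,
  sscale ((1)/2) (sadd (sadd (sscale tau e12) (sscale sigma e13)) e23),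
  sscale ((-1)/2) (sadd (sadd (sscale tau e12) (sscale sigma e13)) e23),
  sscale ((1)/2) (sadd (sadd e12 (sscale (-tau) e13)) (sscale sigma e23)),
  sscale ((-1)/2) (sadd (sadd e12 (sscale (-tau) e13)) (sscale sigma e23)),
  sscale ((1)/2) (sadd (sadd (sscale sigma e12) (sscale (-1) e13)) (sscale (-tau) e23)),
  sscale ((-1)/2) (sadd (sadd (sscale sigma e12) (sscale (-1) e13)) (sscale (-tau) e23)),
  sscale (1/2) (sadd (sscale (1) sone) (sscale (1) (sadd (sscale tau e12) (sscale sigma e23)))),
  sscale (1/2) (sadd (sscale (1) sone) (sscale (-1) (sadd (sscale tau e12) (sscale sigma e23)))),
  sscale (1/2) (sadd (sscale (-1) sone) (sscale (1) (sadd (sscale tau e12) (sscale sigma e23)))),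
  sscale (1/2) (sadd (sscale (-1) sone) (sscale (-1) (sadd (sscale tau e12) (sscale sigma e23)))),
  sscale (1/2) (sadd (sscale (1) sone) (sscale (1) (sadd (sscale sigma e13) (sscale tau e23)))),
  sscale (1/2) (sadd (sscale (1) sone) (sscale (-1) (sadd (sscale sigma e13) (sscale tau e23)))),
  sscale (1/2) (sadd (sscale (-1) sone) (sscale (1) (sadd (sscale sigma e13) (sscale tau e23)))),
  sscale (1/2) (sadd (sscale (-1) sone) (sscale (-1) (sadd (sscale sigma e13) (sscale tau e23)))),
  sscale (1/2) (sadd (sscale (1) sone) (sscale (1) (sadd (sscale sigma e12) (sscale (-tau) e13)))),
  sscale (1/2) (sadd (sscale (1) sone) (sscale (-1) (sadd (sscale sigma e12) (sscale (-tau) e13)))),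
  sscale (1/2) (sadd (sscale (-1) sone) (sscale (1) (sadd (sscale sigma e12) (sscale (-tau) e13)))),
  sscale (1/2) (sadd (sscale (-1) sone) (sscale (-1) (sadd (sscale sigma e12) (sscale (-tau) e13))))]"
  unfolding Psi_def setL1 setL2 by (simp only: set_simps Un_insert_left Un_empty_left)

lemma Psi_map: "[sscale (1) sone,
  sscale (-1) sone,
  sscale ((1)/2) (sadd (sadd (sscale tau e12) (sscale sigma e13)) e23),
  sscale ((-1)/2) (sadd (sadd (sscale tau e12) (sscale sigma e13)) e23),
  sscale ((1)/2) (sadd (sadd e12 (sscale (-tau) e13)) (sscale sigma e23)),
  sscale ((-1)/2) (sadd (sadd e12 (sscale (-tau) e13)) (sscale sigma e23)),
  sscale ((1)/2) (sadd (sadd (sscale sigma e12) (sscale (-1) e13)) (sscale (-tau) e23)),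
  sscale ((-1)/2) (sadd (sadd (sscale sigma e12) (sscale (-1) e13)) (sscale (-tau) e23)),
  sscale (1/2) (sadd (sscale (1) sone) (sscale (1) (sadd (sscale tau e12) (sscale sigma e23)))),
  sscale (1/2) (sadd (sscale (1) sone) (sscale (-1) (sadd (sscale tau e12) (sscale sigma e23)))),
  sscale (1/2) (sadd (sscale (-1) sone) (sscale (1) (sadd (sscale tau e12) (sscale sigma e23)))),
  sscale (1/2) (sadd (sscale (-1) sone) (sscale (-1) (sadd (sscale tau e12) (sscale sigma e23)))),
  sscale (1/2) (sadd (sscale (1) sone) (sscale (1) (sadd (sscale sigma e13) (sscale tau e23)))),
  sscale (1/2) (sadd (sscale (1) sone) (sscale (-1) (sadd (sscale sigma e13) (sscale tau e23)))),
  sscale (1/2) (sadd (sscale (-1) sone) (sscale (1) (sadd (sscale sigma e13) (sscale tau e23)))),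
  sscale (1/2) (sadd (sscale (-1) sone) (sscale (-1) (sadd (sscale sigma e13) (sscale tau e23)))),
  sscale (1/2) (sadd (sscale (1) sone) (sscale (1) (sadd (sscale sigma e12) (sscale (-tau) e13)))),
  sscale (1/2) (sadd (sscale (1) sone) (sscale (-1) (sadd (sscale sigma e12) (sscale (-tau) e13)))),
  sscale (1/2) (sadd (sscale (-1) sone) (sscale (1) (sadd (sscale sigma e12) (sscale (-tau) e13)))),
  sscale (1/2) (sadd (sscale (-1) sone) (sscale (-1) (sadd (sscale sigma e12) (sscale (-tau) e13))))] = map P ipsis"
  by (simp add: ipsis_def P_def tau_def sigma_def e12_def e13_def e23_def e1_def e2_def e3_def sone_def field_simps)

lemma Psi_eq: "Psi = P ` set ipsis"
  by (simp only: Psi_list Psi_map set_map)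

lemma chk_in: "R \<in> set ipsis \<Longrightarrow> chk R"
  using chk_all by (simp add: list_all_iff)

lemma Ei_one: "Ei (ISp (1,0) (0,0) (0,0) (0,0)) = sone"
  by (simp add: sone_def)

lemma sref_P:
  assumes R: "R \<in> set ipsis" and X: "X \<in> set ipsis"
  shows "sref (P R) (P X) \<in> P ` set ipsis"
proof -
  from chk_in[OF R] X obtain T where T: "T \<in> set ipsis"
    and eq: "ismul (ismul R (isrev X)) R = isc (-16) T"
    unfolding chk_def list_all_iff by blast
  have "sref (P R) (P X) = sscale (-1/64) (Ei (ismul (ismul R (isrev X)) R))"
    by (simp add: sref_def P_def srev_sscale smul_sscale_l smul_sscale_r sscale_sscale)
  also have "\<dots> = P T"
    by (simp add: eq P_def sscale_sscale del: ismul.simps isrev.simps isc.simps)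
  finally show ?thesis using T by blast
qed

lemma P_unit:
  assumes R: "R \<in> set ipsis"
  shows "smul (P R) (srev (P R)) = sone" "smul (srev (P R)) (P R) = sone"
proof -
  from chk_in[OF R] have e1: "ismul R (isrev R) = isc 16 (ISp (1,0) (0,0) (0,0) (0,0))"
    and e2: "ismul (isrev R) R = isc 16 (ISp (1,0) (0,0) (0,0) (0,0))"
    unfolding chk_def by blast+
  have "smul (P R) (srev (P R)) = sscale (1/16) (Ei (ismul R (isrev R)))"
    by (simp add: P_def srev_sscale smul_sscale_l smul_sscale_r sscale_sscale)
  also have "\<dots> = sone"
    by (simp only: e1 Ei_isc Ei_one sscale_sscale) simp
  finally show "smul (P R) (srev (P R)) = sone" .
  have "smul (srev (P R)) (P R) = sscale (1/16) (Ei (ismul (isrev R) R))"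
    by (simp add: P_def srev_sscale smul_sscale_l smul_sscale_r sscale_sscale)
  also have "\<dots> = sone"
    by (simp only: e2 Ei_isc Ei_one sscale_sscale) simp
  finally show "smul (srev (P R)) (P R) = sone" .
qed

lemma Psi_closed: "R \<in> Psi \<Longrightarrow> X \<in> Psi \<Longrightarrow> sref R X \<in> Psi"
  unfolding Psi_eq using sref_P by blast

lemma Psi_invol: "R \<in> Psi \<Longrightarrow> sref R (sref R X) = X"
  unfolding Psi_eq using P_unit sref_invol by blast

lemma Psi_sub_twoI: "Psi \<subseteq> twoI"
  using Psi_eq psis_twoI by simp

lemma img_Psi: "R \<in> Psi \<Longrightarrow> sref R ` Psi = Psi"
proof
  assume R: "R \<in> Psi"
  show "sref R ` Psi \<subseteq> Psi" using Psi_closed R by blast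
  show "Psi \<subseteq> sref R ` Psi"
  proof
    fix X assume "X \<in> Psi"
    then show "X \<in> sref R ` Psi"
      using Psi_closed[OF R] Psi_invol[OF R, of X] by (metis image_eqI)
  qed
qed

lemma img_C_sub: "R \<in> Psi \<Longrightarrow> sref R ` Cset \<subseteq> Cset"
proof
  fix Y assume R: "R \<in> Psi" and "Y \<in> sref R ` Cset"
  then obtain X where X: "X \<in> twoI" "X \<notin> Psi" "Y = sref R X" unfolding Cset_def by blast
  have "Y \<in> twoI" using X R Psi_sub_twoI sref_twoI by blast
  moreover have "Y \<notin> Psi"
  proof
    assume "Y \<in> Psi"
    then have "sref R Y \<in> Psi" using Psi_closed R by blast
    then show False using X Psi_invol[OF R, of X] by simp
  qed
  ultimately show "Y \<in> Cset" unfolding Cset_def by blast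
qed

lemma img_C: "R \<in> Psi \<Longrightarrow> sref R ` Cset = Cset"
proof
  assume R: "R \<in> Psi"
  show "sref R ` Cset \<subseteq> Cset" using img_C_sub[OF R] .
  show "Cset \<subseteq> sref R ` Cset"
  proof
    fix X assume "X \<in> Cset"
    then have "sref R X \<in> Cset" using img_C_sub[OF R] by blast
    then show "X \<in> sref R ` Cset" using Psi_invol[OF R, of X] by (metis image_eqI)
  qed
qed

theorem mainTheorem10:
  shows "\<forall>g \<in> A4grp. g ` Psi = Psi \<and> g ` Cset = Cset"
proof
  fix g assume "g \<in> A4grp"
  then show "g ` Psi = Psi \<and> g ` Cset = Cset"
  proof (induction g rule: A4grp.induct)
    case idI then show ?case by simp
  next
    case (compI g R)
    then show ?case by (metis image_comp img_Psi img_C)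
  qed
qed

end
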